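(* Let $m,n\ge 1$ and let $F\subseteq\{1,\dots,m\}\times\{1,\dots,n\}$ be a binary image with row sums $\mathcal R=(r_1,\dots,r_m)$ and column sums $\mathcal C=(c_1,\dots,c_n)$, where $r_1=n$ and $r_m=0$. Let $L_h$ be the length of the horizontal boundary of $F$. Define $b_i=\#\{j: c_j\ge i\}$ and $d_i=b_i-r_i$ for $i=1,\dots,m$. Then for every integer $t\ge 0$ and every choice of indices $1\le i_1<i_2<\dots<i_{2t+1}\le m$, \[ L_h\ \ge\ 2n+d_{i_1}-d_{i_2}+d_{i_3}-\cdots-d_{i_{2t}}+2d_{i_{2t+1}}, \] \[ L_h\ \ge\ 2n-d_{i_{2t+1}}+d_{i_{2t}}-d_{i_{2t-1}}+\cdots+d_{i_2}-2d_{i_1}. \]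
   Context: A binary image is a finite set $F\subseteq\mathbb Z^2$; point $(i,j)$ lies in row $i$ and column $j$ (row indices increase downwards, column indices to the right). The row sum $r_i$ is the number of points of $F$ in row $i$, and the column sum $c_j$ is the number of points of $F$ in column $j$. The horizontal boundary of $F$ is the set of ordered pairs of points $((i,j),(i',j))$ of $\mathbb Z^2$ with $|i-i'|=1$, $(i,j)\in F$ and $(i',j)\notin F$ (so pieces above the top cell or below the bottom cell of a column also count); its length is the number of such pairs. *)

theory Defs
  imports Main
begin

text \<open>A binary image is a finite set of integer points (row, column).\<close>

definition row_sum :: "(int \<times> int) set \<Rightarrow> int \<Rightarrow> nat" where
  "row_sum F i = card {j. (i, j) \<in> F}"

definition col_sum :: "(int \<times> int) set \<Rightarrow> int \<Rightarrow> nat" where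
  "col_sum F j = card {i. (i, j) \<in> F}"

definition hboundary :: "(int \<times> int) set \<Rightarrow> ((int \<times> int) \<times> (int \<times> int)) set" where
  "hboundary F = {((i, j), (i', j')). j' = j \<and> \<bar>i - i'\<bar> = 1 \<and> (i, j) \<in> F \<and> (i', j') \<notin> F}"

definition hboundary_length :: "(int \<times> int) set \<Rightarrow> nat" where
  "hboundary_length F = card (hboundary F)"

definition bseq :: "(int \<times> int) set \<Rightarrow> int \<Rightarrow> int \<Rightarrow> nat" where
  "bseq F n i = card {j \<in> {1..n}. int (col_sum F j) \<ge> i}"

definition dseq :: "(int \<times> int) set \<Rightarrow> int \<Rightarrow> int \<Rightarrow> int" where
  "dseq F n i = int (bseq F n i) - int (row_sum F i)"

end

theory Submission imports Defs begin

definition PV :: "(int \<Rightarrow> int) \<Rightarrow> int \<Rightarrow> int \<Rightarrow> int" where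
  "PV h a b = (\<Sum>y\<in>{a..<b}. max 0 (h (y+1) - h y))"

lemma ivl_Suc: "a \<le> k \<Longrightarrow> {a..<k+1} = insert k {a..<k}" for a k :: int
  by auto

lemma PV_step: "a \<le> k \<Longrightarrow> PV h a (k+1) = PV h a k + max 0 (h (k+1) - h k)"
  unfolding PV_def by (simp add: ivl_Suc)

lemma PV_nonneg: "PV h a b \<ge> 0"
  unfolding PV_def by (rule sum_nonneg) simp

lemma PV_split: "a \<le> b \<Longrightarrow> b \<le> c \<Longrightarrow> PV h a c = PV h a b + PV h b c"
  unfolding PV_def
proof -
  assume "a \<le> b" "b \<le> c"
  then have "{a..<c} = {a..<b} \<union> {b..<c}" by auto
  then show "(\<Sum>y\<in>{a..<c}. max 0 (h (y+1) - h y)) = (\<Sum>y\<in>{a..<b}. max 0 (h (y+1) - h y)) + (\<Sum>y\<in>{b..<c}. max 0 (h (y+1) - h y))"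
    by (simp add: sum.union_disjoint)
qed

lemma PV_incr: "a \<le> b \<Longrightarrow> h b - h a \<le> PV h a b"
proof (induction b rule: int_ge_induct)
  case base then show ?case by (simp add: PV_def)
next
  case (step k) then show ?case by (simp add: PV_step)
qed

lemma PV_diff: "a \<le> b \<Longrightarrow> PV h a b - PV (\<lambda>y. - h y) a b = h b - h a"
proof (induction b rule: int_ge_induct)
  case base then show ?case by (simp add: PV_def)
next
  case (step k) then show ?case by (simp add: PV_step max_def)
qed

lemma PV_mono: "(\<And>y. a \<le> y \<Longrightarrow> y < b \<Longrightarrow> h (y+1) - h y \<le> h' (y+1) - h' y) \<Longrightarrow> PV h a b \<le> PV h' a b"
  unfolding PV_def by (intro sum_mono max.mono) auto

lemma PV_mono2: "a' \<le> a \<Longrightarrow> a \<le> b \<Longrightarrow> b \<le> b' \<Longrightarrow> PV h a b \<le> PV h a' b'"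
  using PV_split[of a' a b h] PV_split[of a' b b' h] PV_nonneg[of h a' a] PV_nonneg[of h b b'] by linarith

lemma alt1:
  fixes g :: "int \<Rightarrow> int" and idx :: "nat \<Rightarrow> int"
  shows "(\<And>k. k < 2 * t \<Longrightarrow> idx k < idx (Suc k)) \<Longrightarrow> a \<le> idx 0 \<Longrightarrow>
    (\<Sum>k<2 * t. (-1) ^ k * g (idx k)) + g (idx (2*t)) \<le> g a + PV g a (idx (2*t))"
proof (induction t)
  case 0 then show ?case using PV_incr[of a "idx 0" g] by simp
next
  case (Suc t)
  have IH: "(\<Sum>k<2 * t. (-1) ^ k * g (idx k)) + g (idx (2*t)) \<le> g a + PV g a (idx (2*t))"
    using Suc by auto
  have o1: "idx (2*t) < idx (2*t+1)" using Suc.prems(1)[of "2*t"] by simp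
  have o2: "idx (2*t+1) < idx (2*t+2)" using Suc.prems(1)[of "2*t+1"] by simp
  note ord = Suc.prems(1)
  have mono: "\<And>k. k \<le> 2*t \<Longrightarrow> idx 0 \<le> idx k"
  proof -
    fix k show "k \<le> 2*t \<Longrightarrow> idx 0 \<le> idx k"
    proof (induction k)
      case (Suc k) then show ?case using ord[of k] by force
    qed simp
  qed
  have a0: "a \<le> idx (2*t)" using mono[of "2*t"] Suc.prems(2) by simp
  have sp: "PV g a (idx (2*t+2)) = PV g a (idx (2*t)) + PV g (idx (2*t)) (idx (2*t+1)) + PV g (idx (2*t+1)) (idx (2*t+2))"
    using PV_split[of a "idx (2*t)" "idx (2*t+2)" g] PV_split[of "idx (2*t)" "idx (2*t+1)" "idx (2*t+2)" g] a0 o1 o2 by simp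
  have inc: "g (idx (2*t+2)) - g (idx (2*t+1)) \<le> PV g (idx (2*t+1)) (idx (2*t+2))"
    using PV_incr o2 by simp
  have e: "2 * Suc t = Suc (Suc (2*t))" by simp
  have s2: "(\<Sum>k<Suc (Suc (2*t)). (-1) ^ k * g (idx k)) = (\<Sum>k<2 * t. (-1) ^ k * g (idx k)) + g (idx (2*t)) - g (idx (2*t+1))"
    by simp
  have i2: "idx (Suc (Suc (2*t))) = idx (2*t+2)" by simp
  show ?case unfolding e s2 i2 using IH sp inc PV_nonneg[of g "idx (2*t)" "idx (2*t+1)"]
    by linarith
qed

lemma idx_mono:
  assumes "\<And>k. k < N \<Longrightarrow> idx k < idx (Suc k)"
  shows "k \<le> N \<Longrightarrow> (idx 0 :: int) \<le> idx k"
proof (induction k)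
  case (Suc k) then show ?case using assms[of k] by force
qed simp

lemma alt2:
  fixes g :: "int \<Rightarrow> int" and idx :: "nat \<Rightarrow> int"
  shows "(\<And>k. k < 2 * t \<Longrightarrow> idx k < idx (Suc k)) \<Longrightarrow>
    - g (idx 0) + (\<Sum>k\<in>{1..2 * t}. (-1) ^ (k + 1) * g (idx k)) + g (idx (2*t)) \<le> PV g (idx 0) (idx (2*t))"
proof (induction t)
  case 0 then show ?case using PV_nonneg[of g "idx 0" "idx 0"] by simp
next
  case (Suc t)
  have IH: "- g (idx 0) + (\<Sum>k\<in>{1..2 * t}. (-1) ^ (k + 1) * g (idx k)) + g (idx (2*t)) \<le> PV g (idx 0) (idx (2*t))"
    using Suc by auto
  have o1: "idx (2*t) < idx (2*t+1)" using Suc.prems(1)[of "2*t"] by simp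
  have o2: "idx (2*t+1) < idx (2*t+2)" using Suc.prems(1)[of "2*t+1"] by simp
  have a0: "idx 0 \<le> idx (2*t)" using idx_mono[of "2 * Suc t" idx "2*t"] Suc.prems(1) by simp
  have sp: "PV g (idx 0) (idx (2*t+2)) = PV g (idx 0) (idx (2*t)) + PV g (idx (2*t)) (idx (2*t+1)) + PV g (idx (2*t+1)) (idx (2*t+2))"
    using PV_split[of "idx 0" "idx (2*t)" "idx (2*t+2)" g] PV_split[of "idx (2*t)" "idx (2*t+1)" "idx (2*t+2)" g] a0 o1 o2 by simp
  have inc: "g (idx (2*t+1)) - g (idx (2*t)) \<le> PV g (idx (2*t)) (idx (2*t+1))"
    using PV_incr o1 by simp
  have e: "2 * Suc t = Suc (Suc (2*t))" by simp
  have s2: "(\<Sum>k\<in>{1..Suc (Suc (2*t))}. (-1) ^ (k + 1) * g (idx k)) = (\<Sum>k\<in>{1..2 * t}. (-1) ^ (k + 1) * g (idx k)) + g (idx (2*t+1)) - g (idx (2*t+2))"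
    by simp
  have i2: "idx (Suc (Suc (2*t))) = idx (2*t+2)" by simp
  show ?case unfolding e s2 i2 using IH sp inc PV_nonneg[of g "idx (2*t+1)" "idx (2*t+2)"]
    by linarith
qed

lemma column:
  fixes S :: "int set" and m c :: int and t :: nat and idx :: "nat \<Rightarrow> int"
  assumes S: "S \<subseteq> {1..m}" "1 \<in> S" "m \<notin> S" and c: "c = int (card S)"
    and ord: "\<And>k. k < 2 * t \<Longrightarrow> idx k < idx (Suc k)"
    and i0: "1 \<le> idx 0" and ix: "idx (2 * t) \<le> m"
  defines "w \<equiv> \<lambda>y. if y \<in> S then 1 else (0::int)"
    and "g \<equiv> \<lambda>y. (if y \<le> c then 1 else 0) - (if y \<in> S then 1 else (0::int))"
  shows "2 + (\<Sum>k<2 * t. (-1) ^ k * g (idx k)) + 2 * g (idx (2 * t)) \<le> PV w 0 m + PV (\<lambda>y. - w y) 0 m"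
    and "2 + (\<Sum>k\<in>{1..2 * t}. (-1) ^ (k + 1) * g (idx k)) - 2 * g (idx 0) \<le> PV w 0 m + PV (\<lambda>y. - w y) 0 m"
proof -
  define E where "E = (\<lambda>a b. PV (\<lambda>y. - w y) a b)"
  define x where "x = idx (2 * t)"
  define a where "a = idx 0"
  have fin: "finite S" using S(1) finite_subset by blast
  have m1: "m > 1"
  proof -
    have "1 \<le> m" using S by auto
    moreover have "1 \<noteq> m" using S by auto
    ultimately show ?thesis by simp
  qed
  have c1: "c \<ge> 1" using c fin S(2) card_gt_0_iff[of S] by force
  have cm: "c < m"
  proof -
    have "S \<subseteq> {1..m-1}"
    proof
      fix y assume "y \<in> S"
      then have "1 \<le> y" "y \<le> m" "y \<noteq> m" using S by auto
      then show "y \<in> {1..m-1}" by simp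
    qed
    then have "card S \<le> card {1..m-1}" by (intro card_mono) simp_all
    then show ?thesis using c m1 by simp
  qed
  have ax: "a \<le> x" unfolding a_def x_def using idx_mono[of "2*t" idx "2*t"] ord by blast
  have w0: "w 0 = 0" "w 1 = 1" "w m = 0" using S unfolding w_def by auto
  have V: "PV w 0 m + PV (\<lambda>y. - w y) 0 m = 2 * E 0 m"
    using PV_diff[of 0 m w] m1 w0 unfolding E_def by simp
  have E01: "E 0 1 = 0"
  proof -
    have "{0..<1::int} = {0}" by auto
    then show ?thesis unfolding E_def PV_def using w0 by simp
  qed
  have Einc: "\<And>a b. a \<le> b \<Longrightarrow> w a - w b \<le> E a b"
  proof -
    fix a b :: int assume "a \<le> b"
    then show "w a - w b \<le> E a b" unfolding E_def using PV_incr[of a b "\<lambda>y. - w y"] by simp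
  qed
  have Esp: "\<And>a b c. a \<le> b \<Longrightarrow> b \<le> c \<Longrightarrow> E a c = E a b + E b c"
    unfolding E_def by (rule PV_split)
  have Enn: "\<And>a b. E a b \<ge> 0" unfolding E_def by (rule PV_nonneg)
  have gw: "\<And>y. g y = (if y \<le> c then 1 else 0) - w y" unfolding g_def w_def by simp
  have gE: "\<And>a b. PV g a b \<le> E a b"
    unfolding E_def by (rule PV_mono) (simp add: gw)
  have g1: "g 1 = 0" "g m = 0" using c1 cm w0 unfolding gw by auto
  have Q1: "(\<Sum>k<2 * t. (-1) ^ k * g (idx k)) + 2 * g x \<le> PV g 1 x + g x"
    using alt1[of t idx 1 g] ord i0 g1 unfolding x_def by simp
  have Q2: "(\<Sum>k\<in>{1..2 * t}. (-1) ^ (k + 1) * g (idx k)) - 2 * g a \<le> PV g a m - g a"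
  proof -
    have "- g a + (\<Sum>k\<in>{1..2 * t}. (-1) ^ (k + 1) * g (idx k)) + g x \<le> PV g a x"
      using alt2[of t idx g] ord unfolding a_def x_def by simp
    moreover have "g m - g x \<le> PV g x m" using PV_incr[of x m g] ix unfolding x_def by blast
    moreover have "PV g a m = PV g a x + PV g x m" using PV_split[of a x m g] ax ix unfolding x_def by blast
    ultimately show ?thesis using g1 by linarith
  qed
  have a1: "1 \<le> a" using i0 a_def by simp
  have x1: "1 \<le> x" using a1 ax by simp
  have xm: "x \<le> m" using ix x_def by simp
  have am: "a \<le> m" using ax xm by simp
  have Esp3: "E 0 m = E 1 a + E a m" using Esp[of 0 1 m] Esp[of 1 a m] E01 a1 am m1 by simp
  have Esp3x: "E 0 m = E 1 x + E x m" using Esp[of 0 1 m] Esp[of 1 x m] E01 x1 xm m1 by simp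
  have wx: "w x = (if x \<in> S then 1 else 0)" "w a = (if a \<in> S then 1 else 0)" unfolding w_def by auto
  have Eam1: "E a m \<ge> w a" using Einc[of a m] am w0 by simp
  have Exm1: "E x m \<ge> w x" using Einc[of x m] xm w0 by simp
  have E1a1: "E 1 a \<ge> 1 - w a" using Einc[of 1 a] a1 w0 by simp
  have E1x1: "E 1 x \<ge> 1 - w x" using Einc[of 1 x] x1 w0 by simp
  have gx: "g x = (if x \<le> c then 1 else 0) - w x" "g a = (if a \<le> c then 1 else 0) - w a" using gw by auto
  have "2 + PV g 1 x + g x \<le> 2 * E 0 m \<and> 2 + PV g a m - g a \<le> 2 * E 0 m"
  proof (cases "S = {1..c}")
    case True
    have gz: "\<And>y. y \<ge> 1 \<Longrightarrow> g y = 0" using True unfolding gw w_def by auto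
    have p1: "PV g 1 x = 0" unfolding PV_def by (rule sum.neutral) (auto simp: gz)
    have p2: "PV g a m = 0" unfolding PV_def using a1 by (intro sum.neutral) (auto simp: gz)
    have "E 1 m \<ge> 1" using Einc[of 1 m] m1 w0 by simp
    moreover have "E 0 m = E 1 m" using Esp[of 0 1 m] E01 m1 by simp
    ultimately show ?thesis using p1 p2 gz[OF x1] gz[OF a1] by simp
  next
    case False
    have cS: "card {1..c} = card S" using c c1 by simp
    obtain y0 where y0: "y0 \<in> {1..c}" "y0 \<notin> S"
    proof -
      have "\<not> {1..c} \<subseteq> S" using card_subset_eq[OF fin _ cS] False by blast
      then show ?thesis using that by blast
    qed
    obtain z where z: "z \<in> S" "z > c"
    proof -
      have "\<not> S \<subseteq> {1..c}" using card_subset_eq[of "{1..c}" S] cS False by auto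
      then obtain z where "z \<in> S" "z \<notin> {1..c}" by blast
      moreover then have "z \<ge> 1" using S by auto
      ultimately show ?thesis using that by force
    qed
    have zm: "z < m"
    proof -
      have "z \<le> m" "z \<noteq> m" using z S by auto
      then show ?thesis by simp
    qed
    have wy0: "w y0 = 0" "w z = 1" using y0 z unfolding w_def by auto
    have y01: "1 \<le> y0" "y0 \<le> c" using y0 by auto
    have E1y0: "E 1 y0 \<ge> 1" using Einc[of 1 y0] y01 w0 wy0 by simp
    have Ezm: "E z m \<ge> 1" using Einc[of z m] zm w0 wy0 by simp
    have P1: "PV g 1 x \<le> E 1 x" "PV g a m \<le> E a m" using gE by auto
    have A: "2 + PV g 1 x + g x \<le> 2 * E 0 m"
    proof (cases "x \<in> S")
      case True
      then show ?thesis using Esp3x Exm1 wx P1 gx Enn[of 1 x] by (simp split: if_splits)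
    next
      case xS: False
      show ?thesis
      proof (cases "x \<le> c")
        case True
        have "E x m = E x z + E z m" using Esp[of x z m] True z zm by simp
        then show ?thesis using Esp3x E1x1 wx P1 gx Enn[of x z] Ezm xS True by simp
      next
        case xc: False
        show ?thesis
        proof (cases "z < x")
          case True
          have "E 1 x = E 1 y0 + E y0 z + E z x" using Esp[of 1 y0 x] Esp[of y0 z x] y01 z True by simp
          moreover have "E z x \<ge> 1" using Einc[of z x] True wy0 xS unfolding w_def by simp
          ultimately show ?thesis using Esp3x E1y0 Enn[of y0 z] Enn[of x m] wx P1 gx xS xc by simp
        next
          case False
          then have "z > x" using z xS by (cases "z = x") auto
          then have "E x m = E x z + E z m" using Esp[of x z m] zm by simp
          then show ?thesis using Esp3x E1x1 wx P1 gx Enn[of x z] Ezm xS xc by simp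
        qed
      qed
    qed
    have B: "2 + PV g a m - g a \<le> 2 * E 0 m"
    proof (cases "a \<in> S")
      case aS: True
      show ?thesis
      proof (cases "y0 < a")
        case True
        have "E 1 a = E 1 y0 + E y0 a" using Esp[of 1 y0 a] y01 True by simp
        then show ?thesis using Esp3 Eam1 E1y0 Enn[of y0 a] wx P1 gx aS by (simp split: if_splits)
      next
        case False
        then have ay: "a < y0" using aS y0 by (cases "a = y0") auto
        then have ac: "a \<le> c" using y01 by simp
        have "E a m = E a y0 + E y0 z + E z m" using Esp[of a y0 m] Esp[of y0 z m] ay y01 z zm by simp
        moreover have "E a y0 \<ge> 1" using Einc[of a y0] ay wy0 aS unfolding w_def by simp
        ultimately show ?thesis using Esp3 Ezm Enn[of y0 z] Enn[of 1 a] wx P1 gx aS ac by simp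
      qed
    next
      case False
      then show ?thesis using Esp3 E1a1 Enn[of a m] wx P1 gx by (simp split: if_splits)
    qed
    show ?thesis using A B by simp
  qed
  then show "2 + (\<Sum>k<2 * t. (-1) ^ k * g (idx k)) + 2 * g (idx (2 * t)) \<le> PV w 0 m + PV (\<lambda>y. - w y) 0 m"
    and "2 + (\<Sum>k\<in>{1..2 * t}. (-1) ^ (k + 1) * g (idx k)) - 2 * g (idx 0) \<le> PV w 0 m + PV (\<lambda>y. - w y) 0 m"
    using Q1 Q2 V unfolding x_def a_def by linarith+
qed

lemma card_box:
  fixes X :: "(int \<times> int) set"
  assumes "X \<subseteq> A \<times> B" "finite A" "finite B"
  shows "int (card X) = (\<Sum>j\<in>B. \<Sum>i\<in>A. if (i, j) \<in> X then 1 else 0)"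
proof -
  have "X = (A \<times> B) \<inter> {p. p \<in> X}" using assms by auto
  then have "int (card X) = (\<Sum>p\<in>A \<times> B. of_bool (p \<in> X))"
    using assms by (simp add: sum_of_bool_eq)
  also have "\<dots> = (\<Sum>i\<in>A. \<Sum>j\<in>B. of_bool ((i, j) \<in> X))"
    by (simp add: sum.cartesian_product)
  also have "\<dots> = (\<Sum>j\<in>B. \<Sum>i\<in>A. of_bool ((i, j) \<in> X))"
    by (rule sum.swap)
  finally show ?thesis by (simp add: of_bool_def)
qed

lemma sum_ind_card: "finite A \<Longrightarrow> (\<Sum>j\<in>A. if P j then 1 else 0) = int (card {j \<in> A. P j})"
proof -
  assume "finite A"
  then have "(\<Sum>j\<in>A. of_bool (P j)) = int (card (A \<inter> {j. P j}))" by simp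
  moreover have "A \<inter> {j. P j} = {j \<in> A. P j}" by auto
  ultimately show ?thesis by (simp add: of_bool_def)
qed

theorem theorem3p1:
  fixes m n :: int and F :: "(int \<times> int) set" and t :: nat and idx :: "nat \<Rightarrow> int"
  assumes "m \<ge> 1" and "n \<ge> 1"
    and "F \<subseteq> {1..m} \<times> {1..n}"
    and "row_sum F 1 = nat n" and "row_sum F m = 0"
    and "1 \<le> idx 0" and "idx (2 * t) \<le> m"
    and "\<And>k. k < 2 * t \<Longrightarrow> idx k < idx (Suc k)"
  shows "int (hboundary_length F) \<ge>
           2 * n + (\<Sum>k<2 * t. (-1) ^ k * dseq F n (idx k)) + 2 * dseq F n (idx (2 * t))
       \<and> int (hboundary_length F) \<ge>
           2 * n
             + (\<Sum>k\<in>{1..2 * t}. (-1) ^ (k + 1) * dseq F n (idx k)) - 2 * dseq F n (idx 0)"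
proof -
  note Fsub = assms(3)
  define w where "w = (\<lambda>j y. if (y, j) \<in> F then 1 else (0::int))"
  define G where "G = (\<lambda>j y. (if y \<le> int (col_sum F j) then 1 else 0) - (if (y, j) \<in> F then 1 else (0::int)))"
  define V where "V = (\<lambda>j. PV (w j) 0 m + PV (\<lambda>y. - w j y) 0 m)"
  have finF: "finite F" using Fsub finite_subset by blast
  have row1: "\<And>j. j \<in> {1..n} \<Longrightarrow> (1, j) \<in> F"
  proof -
    have sub: "{j. (1, j) \<in> F} \<subseteq> {1..n}" using Fsub by auto
    have "card {j. (1, j) \<in> F} = card {1..n}" using assms(4) unfolding row_sum_def by simp
    then have "{j. (1, j) \<in> F} = {1..n}" using card_subset_eq[OF _ sub] by simp
    then show "\<And>j. j \<in> {1..n} \<Longrightarrow> (1, j) \<in> F" by blast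
  qed
  have rowm: "\<And>j. (m, j) \<notin> F"
  proof -
    have sub: "{j. (m, j) \<in> F} \<subseteq> {1..n}" using Fsub by auto
    then have "finite {j. (m, j) \<in> F}" using finite_subset by blast
    then have "{j. (m, j) \<in> F} = {}" using assms(5) unfolding row_sum_def by simp
    then show "\<And>j. (m, j) \<notin> F" by blast
  qed
  have col: "\<And>j. j \<in> {1..n} \<Longrightarrow>
      2 + (\<Sum>k<2 * t. (-1) ^ k * G j (idx k)) + 2 * G j (idx (2 * t)) \<le> V j \<and>
      2 + (\<Sum>k\<in>{1..2 * t}. (-1) ^ (k + 1) * G j (idx k)) - 2 * G j (idx 0) \<le> V j"
  proof -
    fix j assume j: "j \<in> {1..n}"
    have S: "{i. (i, j) \<in> F} \<subseteq> {1..m}" "1 \<in> {i. (i, j) \<in> F}" "m \<notin> {i. (i, j) \<in> F}"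
      using Fsub row1[OF j] rowm by auto
    have wj: "w j = (\<lambda>y. if y \<in> {i. (i, j) \<in> F} then 1 else 0)" unfolding w_def by auto
    have Gj: "G j = (\<lambda>y. (if y \<le> int (col_sum F j) then 1 else 0) - (if y \<in> {i. (i, j) \<in> F} then 1 else 0))"
      unfolding G_def by auto
    show "2 + (\<Sum>k<2 * t. (-1) ^ k * G j (idx k)) + 2 * G j (idx (2 * t)) \<le> V j \<and>
      2 + (\<Sum>k\<in>{1..2 * t}. (-1) ^ (k + 1) * G j (idx k)) - 2 * G j (idx 0) \<le> V j"
      using column[OF S, of "int (col_sum F j)" t idx] assms(6,7,8) unfolding V_def wj Gj col_sum_def
      by auto
  qed
  have dseq_eq: "\<And>i. dseq F n i = (\<Sum>j\<in>{1..n}. G j i)"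
  proof -
    fix i
    have "int (bseq F n i) = (\<Sum>j\<in>{1..n}. if i \<le> int (col_sum F j) then 1 else 0)"
      unfolding bseq_def by (simp add: sum_ind_card)
    moreover have "int (row_sum F i) = (\<Sum>j\<in>{1..n}. if (i, j) \<in> F then 1 else 0)"
    proof -
      have "{j \<in> {1..n}. (i, j) \<in> F} = {j. (i, j) \<in> F}" using Fsub by auto
      then show ?thesis unfolding row_sum_def by (simp add: sum_ind_card)
    qed
    ultimately show "dseq F n i = (\<Sum>j\<in>{1..n}. G j i)"
      unfolding dseq_def G_def by (simp add: sum_subtractf)
  qed
  have hb: "int (hboundary_length F) = (\<Sum>j\<in>{1..n}. V j)"
  proof -
    define D where "D = {(i, j). (i, j) \<in> F \<and> (i + 1, j) \<notin> F}"
    define U where "U = {(i, j). (i + 1, j) \<in> F \<and> (i, j) \<notin> F}"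
    define fD where "fD = (\<lambda>(i::int, j::int). ((i, j), (i + 1, j)))"
    define fU where "fU = (\<lambda>(i::int, j::int). ((i + 1, j), (i, j)))"
    have hbe: "hboundary F = fD ` D \<union> fU ` U"
    proof (rule set_eqI)
      fix p :: "(int \<times> int) \<times> (int \<times> int)"
      obtain i j i' j' where p: "p = ((i, j), (i', j'))" by (metis prod.collapse)
      show "p \<in> hboundary F \<longleftrightarrow> p \<in> fD ` D \<union> fU ` U"
      proof
        assume "p \<in> hboundary F"
        then have h: "j' = j" "\<bar>i - i'\<bar> = 1" "(i, j) \<in> F" "(i', j') \<notin> F"
          unfolding hboundary_def p by auto
        show "p \<in> fD ` D \<union> fU ` U"
        proof (cases "i' = i + 1")
          case True
          then have "p = fD (i, j)" "(i, j) \<in> D" using h p unfolding fD_def D_def by auto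
          then show ?thesis by blast
        next
          case False
          then have "i' = i - 1" using h by arith
          then have "p = fU (i', j)" "(i', j) \<in> U" using h p unfolding fU_def U_def by auto
          then show ?thesis by blast
        qed
      next
        assume "p \<in> fD ` D \<union> fU ` U"
        then show "p \<in> hboundary F" unfolding hboundary_def fD_def fU_def D_def U_def by auto
      qed
    qed
    have Dsub: "D \<subseteq> {0..<m} \<times> {1..n}"
    proof
      fix p assume "p \<in> D"
      then obtain i j where p: "p = (i, j)" "(i, j) \<in> F" unfolding D_def by auto
      have "(i, j) \<in> {1..m} \<times> {1..n}" using Fsub p by blast
      moreover have "i \<noteq> m" using rowm p by metis
      ultimately have "1 \<le> i" "i \<le> m" "j \<in> {1..n}" "i \<noteq> m" by auto
      then show "p \<in> {0..<m} \<times> {1..n}" using p by auto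
    qed
    have Usub: "U \<subseteq> {0..<m} \<times> {1..n}"
    proof
      fix p assume "p \<in> U"
      then obtain i j where p: "p = (i, j)" "(i + 1, j) \<in> F" unfolding U_def by auto
      have "(i + 1, j) \<in> {1..m} \<times> {1..n}" using Fsub p by blast
      moreover have "i + 1 \<noteq> m" using rowm p by metis
      ultimately have "1 \<le> i + 1" "i + 1 \<le> m" "j \<in> {1..n}" "i + 1 \<noteq> m" by auto
      then show "p \<in> {0..<m} \<times> {1..n}" using p by auto
    qed
    have finD: "finite D" using Dsub finite_subset by blast
    have finU: "finite U" using Usub finite_subset by blast
    have injD: "inj_on fD D" unfolding fD_def inj_on_def by auto
    have injU: "inj_on fU U" unfolding fU_def inj_on_def by auto
    have disj: "fD ` D \<inter> fU ` U = {}" unfolding fD_def fU_def by auto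
    have "hboundary_length F = card D + card U"
      unfolding hboundary_length_def hbe
      using card_Un_disjoint[of "fD ` D" "fU ` U"] finD finU disj card_image[OF injD] card_image[OF injU] by simp
    then have "int (hboundary_length F) = int (card D) + int (card U)" by simp
    also have "\<dots> = (\<Sum>j\<in>{1..n}. (\<Sum>i\<in>{0..<m}. if (i, j) \<in> D then 1 else 0) + (\<Sum>i\<in>{0..<m}. if (i, j) \<in> U then 1 else 0))"
      using card_box[OF Dsub] card_box[OF Usub] by (simp add: sum.distrib)
    also have "\<dots> = (\<Sum>j\<in>{1..n}. V j)"
    proof (rule sum.cong[OF refl])
      fix j
      have "(\<Sum>i\<in>{0..<m}. if (i, j) \<in> D then 1 else 0) = PV (\<lambda>y. - w j y) 0 m"
        unfolding PV_def D_def w_def by (rule sum.cong) auto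
      moreover have "(\<Sum>i\<in>{0..<m}. if (i, j) \<in> U then 1 else 0) = PV (w j) 0 m"
        unfolding PV_def U_def w_def by (rule sum.cong) auto
      ultimately show "(\<Sum>i\<in>{0..<m}. if (i, j) \<in> D then 1 else 0) + (\<Sum>i\<in>{0..<m}. if (i, j) \<in> U then 1 else 0) = V j"
        unfolding V_def by simp
    qed
    finally show ?thesis .
  qed
  have sum2: "(\<Sum>j\<in>{1..n}. (2::int)) = 2 * n" using assms(2) by simp
  have swap1: "(\<Sum>k<2 * t. (-1) ^ k * dseq F n (idx k)) = (\<Sum>j\<in>{1..n}. \<Sum>k<2 * t. (-1) ^ k * G j (idx k))"
    unfolding dseq_eq by (simp add: sum_distrib_left sum.swap[of _ "{..<2*t}"])
  have swap2: "(\<Sum>k\<in>{1..2*t}. (-1) ^ (k+1) * dseq F n (idx k)) = (\<Sum>j\<in>{1..n}. \<Sum>k\<in>{1..2*t}. (-1) ^ (k+1) * G j (idx k))"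
    unfolding dseq_eq sum_distrib_left by (rule sum.swap)
  have A: "(\<Sum>j\<in>{1..n}. 2 + (\<Sum>k<2 * t. (-1) ^ k * G j (idx k)) + 2 * G j (idx (2 * t))) \<le> (\<Sum>j\<in>{1..n}. V j)"
    using col by (intro sum_mono) blast
  have B: "(\<Sum>j\<in>{1..n}. 2 + (\<Sum>k\<in>{1..2 * t}. (-1) ^ (k + 1) * G j (idx k)) - 2 * G j (idx 0)) \<le> (\<Sum>j\<in>{1..n}. V j)"
    using col by (intro sum_mono) blast
  show ?thesis
    using A B assms(2) unfolding hb swap1 swap2 unfolding dseq_eq
    by (simp add: sum.distrib sum_subtractf sum_distrib_left)
qed

end
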